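(* Assume the target tube $\mathscr{T}_N$ is closed, $\mathcal{U}$ is compact, and each $f_k$ is continuous on $\mathcal{X}\times\mathcal{U}$. Let $\alpha\in[0,1]$, $k\in\mathbb{N}_{[0,N-1]}$, and let $\mathcal{E}_1,\dots,\mathcal{E}_M\subseteq\mathcal{W}$ be bounded measurable sets such that $\mathbb{P}\big((w_k,\dots,w_{N-1})\in\mathcal{E}_i^{N-k}\big)=\alpha$ for every $i\in\mathbb{N}_{[1,M]}$. Then $$\bigcup_{m=1}^M\mathcal{R}_k(\mathscr{T}_N,\mathcal{E}_m)\subseteq\mathcal{L}_k(\alpha).$$
   Context: Fix $N\in\mathbb{N}$, $N>0$, and write $\mathbb{N}_{[a,b]}=\{a,a+1,\dots,b\}$. Consider the discrete-time system $x_{k+1}=f_k(x_k,u_k)+w_k$, $k=0,\dots,N-1$, with state $x_k\in\mathcal{X}\subseteq\mathbb{R}^n$, input $u_k\in\mathcal{U}\subseteq\mathbb{R}^m$, disturbance $w_k\in\mathcal{W}\subseteq\mathbb{R}^n$ with $0\in\mathcal{W}$, and $f_k:\mathcal{X}\times\mathcal{U}\to\mathcal{X}$. A target tube is a sequence $\mathscr{T}_N=[\mathcal{T}_0,\dots,\mathcal{T}_N]$ of subsets of $\mathcal{X}$; it is called closed (resp. convex) if every $\mathcal{T}_k$ is closed (resp. convex). In the stochastic setting, $w_0,\dots,w_{N-1}$ are i.i.d. random vectors with an absolutely continuous distribution $\mathbb{P}_w$ on $\mathcal{W}$. A Markov policy is a tuple $\pi=[\mu_0,\dots,\mu_{N-1}]$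 of universally measurable maps $\mu_k:\mathcal{X}\to\mathcal{U}$; $\mathcal{M}$ denotes the set of Markov policies. For $\pi\in\mathcal{M}$ and $x_k=y$, $\mathbb{P}^\pi_k(\cdot\,|\,y)$ denotes the probability law of $(x_{k+1},\dots,x_N)$ generated by $x_{t+1}=f_t(x_t,\mu_t(x_t))+w_t$. The stochastic $\alpha$-level reach set is $\mathcal{L}_k(\alpha)=\{y\in\mathcal{T}_k:\sup_{\pi\in\mathcal{M}}\mathbb{P}^\pi_k(\bigcap_{t=k+1}^N\{x_t\in\mathcal{T}_t\}\,|\,y)\ge\alpha\}$. For $\mathcal{E}\subseteq\mathcal{W}$ and $k\in\mathbb{N}_{[0,N-1]}$, the disturbance minimal reach set $\mathcal{R}_k(\mathscr{T}_N,\mathcal{E})$ is the set of $x_k\in\mathcal{T}_k$ for which there exist state-feedback laws $\nu_t:\mathcal{X}\to\mathcal{U}$, $t\in\mathbb{N}_{[k,N-1]}$ (no measurability required), such that for every disturbance sequence $w_k,\dots,w_{N-1}\in\mathcal{E}$ the trajectory $x_{t+1}=f_t(x_t,\nu_t(x_t))+w_t$ satisfies $x_t\in\mathcal{T}_t$ for all $t\in\mathbb{N}_{[k+1,N]}$; also $\mathcal{R}_N(\mathscr{T}_N,\mathcal{E})=\mathcal{T}_N$. *)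

theory Defs
  imports "HOL-Probability.Probability"
begin

definition univ_measurable_set :: "'a::topological_space set \<Rightarrow> bool" where
  "univ_measurable_set A \<longleftrightarrow>
     (\<forall>M::'a measure. prob_space M \<and> sets M = sets borel \<longrightarrow> A \<in> sets (completion M))"

definition univ_measurable :: "('a::topological_space \<Rightarrow> 'b::topological_space) \<Rightarrow> bool" where
  "univ_measurable g \<longleftrightarrow> (\<forall>B \<in> sets borel. univ_measurable_set (g -` B))"

(* closed-loop trajectory started at time k in state y: traj f mu k y w j = x_{k+j},
   with x_{t+1} = f_t(x_t, mu_t(x_t)) + w_t *)
fun traj :: "(nat \<Rightarrow> 'x::real_vector \<Rightarrow> 'u \<Rightarrow> 'x) \<Rightarrow> (nat \<Rightarrow> 'x \<Rightarrow> 'u)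
              \<Rightarrow> nat \<Rightarrow> 'x \<Rightarrow> (nat \<Rightarrow> 'x) \<Rightarrow> nat \<Rightarrow> 'x" where
  "traj f mu k y w 0 = y"
| "traj f mu k y w (Suc j) =
     f (k + j) (traj f mu k y w j) (mu (k + j) (traj f mu k y w j)) + w (k + j)"

definition markov_policies :: "'x::euclidean_space set \<Rightarrow> 'u::euclidean_space set \<Rightarrow> nat
                                 \<Rightarrow> (nat \<Rightarrow> 'x \<Rightarrow> 'u) set" where
  "markov_policies X U N =
     {mu. \<forall>t < N. univ_measurable (mu t) \<and> (\<forall>x \<in> X. mu t x \<in> U)}"

definition dist_seq :: "'x::euclidean_space measure \<Rightarrow> nat \<Rightarrow> nat \<Rightarrow> (nat \<Rightarrow> 'x) measure" where
  "dist_seq Pw k N = PiM {k..<N} (\<lambda>_. Pw)"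

definition reach_prob :: "'x::euclidean_space measure \<Rightarrow> (nat \<Rightarrow> 'x \<Rightarrow> 'u \<Rightarrow> 'x)
     \<Rightarrow> nat \<Rightarrow> (nat \<Rightarrow> 'x set) \<Rightarrow> (nat \<Rightarrow> 'x \<Rightarrow> 'u) \<Rightarrow> nat \<Rightarrow> 'x \<Rightarrow> real" where
  "reach_prob Pw f N T mu k y =
     measure (completion (dist_seq Pw k N))
       {w \<in> space (dist_seq Pw k N). \<forall>j \<in> {1..N - k}. traj f mu k y w j \<in> T (k + j)}"

definition level_reach_set :: "'x::euclidean_space set \<Rightarrow> 'u::euclidean_space set \<Rightarrow> 'x measure
     \<Rightarrow> (nat \<Rightarrow> 'x \<Rightarrow> 'u \<Rightarrow> 'x) \<Rightarrow> nat \<Rightarrow> (nat \<Rightarrow> 'x set) \<Rightarrow> nat \<Rightarrow> real \<Rightarrow> 'x set" where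
  "level_reach_set X U Pw f N T k \<alpha> =
     {y \<in> T k. (SUP mu \<in> markov_policies X U N. reach_prob Pw f N T mu k y) \<ge> \<alpha>}"

(* disturbance minimal reach set R_k(T_N, E) (feedback laws need not be measurable) *)
definition min_reach_set :: "'x::euclidean_space set \<Rightarrow> 'u::euclidean_space set
     \<Rightarrow> (nat \<Rightarrow> 'x \<Rightarrow> 'u \<Rightarrow> 'x) \<Rightarrow> nat \<Rightarrow> (nat \<Rightarrow> 'x set) \<Rightarrow> 'x set \<Rightarrow> nat \<Rightarrow> 'x set" where
  "min_reach_set X U f N T E k =
     (if k = N then T N else
      {y \<in> T k. \<exists>nu :: nat \<Rightarrow> 'x \<Rightarrow> 'u.
          (\<forall>t \<in> {k..<N}. \<forall>x \<in> X. nu t x \<in> U) \<and>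
          (\<forall>w :: nat \<Rightarrow> 'x. (\<forall>t \<in> {k..<N}. w t \<in> E) \<longrightarrow>
              (\<forall>j \<in> {1..N - k}. traj f nu k y w j \<in> T (k + j)))})"

end

theory Submission
  imports Defs
begin

primrec selA :: "('b::metric_space \<times> 'a) set \<Rightarrow> (nat \<Rightarrow> 'b list) \<Rightarrow> nat \<Rightarrow> 'a \<Rightarrow> 'b set" where
  "selA Gr L 0 x = {u. (u, x) \<in> Gr}"
| "selA Gr L (Suc n) x = selA Gr L n x \<inter>
     cball (L n ! (LEAST i. selA Gr L n x \<inter> cball (L n ! i) ((1/2)^n) \<noteq> {})) ((1/2)^n)"

lemma selA_sub0: "selA Gr L n x \<subseteq> selA Gr L 0 x"
  by (induction n) auto

lemma selA_mono: "m \<le> n \<Longrightarrow> selA Gr L n x \<subseteq> selA Gr L m x"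
proof (induction n)
  case 0 then show ?case by simp
next
  case (Suc n) then show ?case by (cases "m = Suc n") auto
qed

lemma selA_closed:
  assumes "closed Gr" shows "closed (selA Gr L n x)"
proof (induction n)
  case 0
  have "selA Gr L 0 x = (\<lambda>u. (u, x)) -` Gr" by auto
  moreover have "continuous_on UNIV (\<lambda>u::'a. (u, x))" by (intro continuous_intros)
  ultimately show ?case using assms continuous_closed_vimage by (metis closed_UNIV continuous_closed_preimage inf_top.left_neutral)
next
  case (Suc n) then show ?case by auto
qed

lemma Least_eq_iff:
  fixes P :: "nat \<Rightarrow> bool"
  assumes "\<exists>i. P i"
  shows "(LEAST i. P i) = i \<longleftrightarrow> P i \<and> (\<forall>j<i. \<not> P j)"
  using assms by (metis LeastI Least_equality not_less not_less_Least)

lemma borel_selection: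
  fixes Gr :: "('b::euclidean_space \<times> 'a::euclidean_space) set"
  assumes Gr_closed: "closed Gr" and U_comp: "compact U" and Gr_sub: "Gr \<subseteq> U \<times> UNIV"
    and u0: "u0 \<in> U"
  shows "\<exists>g. g \<in> borel_measurable borel \<and> (\<forall>x. g x \<in> U) \<and>
             (\<forall>x. (\<exists>u. (u, x) \<in> Gr) \<longrightarrow> (g x, x) \<in> Gr)"
proof -
  have "\<forall>n. \<exists>l. U \<subseteq> (\<Union>c\<in>set l. ball c ((1/2::real)^n))"
  proof
    fix n
    have "U \<subseteq> (\<Union>c\<in>U. ball c ((1/2::real)^n))" by auto
    then obtain C' where "C' \<subseteq> U" "finite C'" "U \<subseteq> (\<Union>c\<in>C'. ball c ((1/2::real)^n))"
      using compactE_image[OF U_comp, of U "\<lambda>c. ball c ((1/2::real)^n)"] by auto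
    then show "\<exists>l. U \<subseteq> (\<Union>c\<in>set l. ball c ((1/2::real)^n))"
      by (metis finite_list)
  qed
  then obtain L where L: "\<And>n. U \<subseteq> (\<Union>c\<in>set (L n). ball c ((1/2::real)^n))" by metis
  define A where "A = selA Gr L"
  define P where "P n x i \<longleftrightarrow> A n x \<inter> cball (L n ! i) ((1/2)^n) \<noteq> {}" for n x i
  define I where "I n x = (LEAST i. P n x i)" for n x
  have A_Suc: "A (Suc n) x = A n x \<inter> cball (L n ! I n x) ((1/2)^n)" for n x
    by (simp add: A_def I_def P_def)
  have AU: "A n x \<subseteq> U" for n x
    using selA_sub0[of Gr L n x] Gr_sub by (auto simp: A_def)
  have ex: "\<exists>i. P n x i" if ne: "A n x \<noteq> {}" for n x
  proof -
    obtain u where u: "u \<in> A n x" using ne by auto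
    then obtain c where "c \<in> set (L n)" "u \<in> ball c ((1/2)^n)" using L AU by blast
    then obtain i where "i < length (L n)" "L n ! i = c" by (metis in_set_conv_nth)
    then have "P n x i" using u \<open>u \<in> ball c _\<close> by (auto simp: P_def dist_commute)
    then show ?thesis by blast
  qed
  have nonempty: "A n x \<noteq> {}" if "A 0 x \<noteq> {}" for n x
  proof (induction n)
    case 0 then show ?case using that by simp
  next
    case (Suc n)
    have "P n x (I n x)" unfolding I_def using ex[OF Suc] by (rule LeastI_ex)
    then show ?case by (simp add: A_Suc P_def)
  qed
  have closedproj: "closed {x. A 0 x \<inter> C \<noteq> {}}" if "closed C" for C
  proof -
    have "{x. A 0 x \<inter> C \<noteq> {}} = {x. \<exists>u. u \<in> U \<and> (u, x) \<in> Gr \<inter> (C \<times> UNIV)}"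
      using Gr_sub by (auto simp: A_def)
    then show ?thesis
      using closed_compact_projection[OF U_comp, of "Gr \<inter> (C \<times> UNIV)"] Gr_closed that
      by (simp add: closed_Int closed_Times)
  qed
  have meas: "{x. A n x \<inter> C \<noteq> {}} \<in> sets borel" if "closed C" for n C
    using that
  proof (induction n arbitrary: C)
    case 0 then show ?case using closedproj by (simp add: borel_closed)
  next
    case (Suc n)
    define cb where "cb i = cball (L n ! i) ((1/2::real)^n)" for i
    have "{x. A (Suc n) x \<inter> C \<noteq> {}} =
       (\<Union>i. {x. A n x \<inter> cb i \<noteq> {}} \<inter> (- (\<Union>j\<in>{..<i}. {x. A n x \<inter> cb j \<noteq> {}}))
             \<inter> {x. A n x \<inter> (cb i \<inter> C) \<noteq> {}})" (is "?L = ?R")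
    proof (intro set_eqI iffI)
      fix x assume "x \<in> ?L"
      then have ne: "A n x \<noteq> {}" by (auto simp: A_Suc)
      have "P n x (I n x) \<and> (\<forall>j<I n x. \<not> P n x j)"
        using Least_eq_iff[OF ex[OF ne], of "I n x"] by (simp add: I_def)
      then show "x \<in> ?R" using \<open>x \<in> ?L\<close>
        by (auto simp: A_Suc P_def cb_def intro!: exI[of _ "I n x"])
    next
      fix x assume "x \<in> ?R"
      then obtain i where i: "P n x i" "\<forall>j<i. \<not> P n x j" "A n x \<inter> (cb i \<inter> C) \<noteq> {}"
        by (auto simp: P_def cb_def)
      then have "I n x = i" unfolding I_def by (subst Least_eq_iff) auto
      then show "x \<in> ?L" using i(3) by (auto simp: A_Suc cb_def)
    qed
    moreover have "?R \<in> sets borel"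
    proof -
      have b: "{x. A n x \<inter> D \<noteq> {}} \<in> sets borel" if "closed D" for D using Suc.IH that by blast
      have cbc: "closed (cb i)" for i by (simp add: cb_def)
      have u: "(\<Union>j\<in>{..<i}. {x. A n x \<inter> cb j \<noteq> {}}) \<in> sets borel" for i
        by (rule sets.finite_UN) (auto intro: b cbc)
      show ?thesis
        apply (rule sets.countable_UN)
        apply (unfold image_subset_iff)
        apply (intro ballI sets.Int borel_comp u b cbc closed_Int Suc.prems)
        done
    qed
    ultimately show ?case by simp
  qed
  define S0 where "S0 = {x. A 0 x \<noteq> {}}"
  have S0_meas: "S0 \<in> sets borel" using meas[of UNIV 0] by (simp add: S0_def)
  have lim_ex: "\<exists>a. \<forall>n. a \<in> A n x" if "x \<in> S0" for x
  proof -
    have "\<exists>n. \<forall>u\<in>A n x. \<forall>v\<in>A n x. dist u v < e" if e: "e > 0" for e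
    proof -
      obtain n where n: "(1/2::real)^n < e/2"
        using real_arch_pow_inv[of "e/2" "1/2"] e by auto
      have "dist u v < e" if "u \<in> A (Suc n) x" "v \<in> A (Suc n) x" for u v
      proof -
        have "dist u (L n ! I n x) \<le> (1/2)^n" "dist v (L n ! I n x) \<le> (1/2)^n"
          using that by (auto simp: A_Suc dist_commute)
        then show ?thesis using n dist_triangle2[of u v "L n ! I n x"] by linarith
      qed
      then show ?thesis by blast
    qed
    moreover have "closed (A n x)" for n by (simp add: A_def selA_closed[OF Gr_closed])
    moreover have "A n x \<noteq> {}" for n using nonempty that by (simp add: S0_def)
    moreover have "A n x \<subseteq> A m x" if "m \<le> n" for m n using selA_mono[OF that] by (simp add: A_def)
    ultimately obtain a where "\<And>n. a \<in> A n x"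
      using decreasing_closed_nest[of "\<lambda>n. A n x"] by metis
    then show ?thesis by blast
  qed
  define g where "g x = (if x \<in> S0 then (SOME a. \<forall>n. a \<in> A n x) else u0)" for x
  have g_in: "\<forall>n. g x \<in> A n x" if "x \<in> S0" for x
    using someI_ex[OF lim_ex[OF that]] that by (simp add: g_def)
  define J where "J n x = (if x \<in> S0 then I n x else 0)" for n x
  define gn where "gn n x = (if x \<in> S0 then L n ! J n x else u0)" for n x
  have J_meas: "J n \<in> measurable borel (count_space UNIV)" for n
  proof -
    have "J n -` {i} \<in> sets borel" for i
    proof -
      have "J n -` {i} = (S0 \<inter> ({x. A n x \<inter> cball (L n ! i) ((1/2)^n) \<noteq> {}} \<inter>
          (- (\<Union>j\<in>{..<i}. {x. A n x \<inter> cball (L n ! j) ((1/2)^n) \<noteq> {}})))) \<union> (if i = 0 then - S0 else {})"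
      proof (intro set_eqI iffI)
        fix x assume x: "x \<in> J n -` {i}"
        show "x \<in> (S0 \<inter> ({x. A n x \<inter> cball (L n ! i) ((1/2)^n) \<noteq> {}} \<inter>
          (- (\<Union>j\<in>{..<i}. {x. A n x \<inter> cball (L n ! j) ((1/2)^n) \<noteq> {}})))) \<union> (if i = 0 then - S0 else {})"
        proof (cases "x \<in> S0")
          case True
          then have "I n x = i" using x by (simp add: J_def)
          then have "P n x i \<and> (\<forall>j<i. \<not> P n x j)"
            using Least_eq_iff[OF ex[OF nonempty], of x n i] True by (simp add: I_def S0_def)
          then show ?thesis using True by (auto simp: P_def)
        next
          case False then show ?thesis using x by (auto simp: J_def)
        qed
      next
        fix x assume x: "x \<in> (S0 \<inter> ({x. A n x \<inter> cball (L n ! i) ((1/2)^n) \<noteq> {}} \<inter>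
          (- (\<Union>j\<in>{..<i}. {x. A n x \<inter> cball (L n ! j) ((1/2)^n) \<noteq> {}})))) \<union> (if i = 0 then - S0 else {})"
        show "x \<in> J n -` {i}"
        proof (cases "x \<in> S0")
          case True
          then have "P n x i \<and> (\<forall>j<i. \<not> P n x j)" using x by (auto simp: P_def split: if_splits)
          then have "I n x = i" unfolding I_def by (subst Least_eq_iff) auto
          then show ?thesis using True by (simp add: J_def)
        next
          case False then show ?thesis using x by (auto simp: J_def split: if_splits)
        qed
      qed
      moreover have "\<dots> \<in> sets borel"
      proof -
        have u: "(\<Union>j\<in>{..<i}. {x. A n x \<inter> cball (L n ! j) ((1/2)^n) \<noteq> {}}) \<in> sets borel"
          by (rule sets.finite_UN) (auto intro: meas)

          have c: "(if i = 0 then - S0 else {}) \<in> sets borel" using S0_meas by (simp add: borel_comp)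
          have m: "{x. A n x \<inter> cball (L n ! i) ((1/2)^n) \<noteq> {}} \<in> sets borel" by (rule meas) simp
          show ?thesis using sets.Un[OF sets.Int[OF S0_meas sets.Int[OF m borel_comp[OF u]]] c] .
      qed
      ultimately show ?thesis by simp
    qed
    then show ?thesis by (simp add: measurable_count_space_eq2_countable)
  qed
  have gn_meas: "gn n \<in> borel_measurable borel" for n
  proof -
    have "(\<lambda>x. L n ! J n x) \<in> borel_measurable borel"
      by (rule measurable_compose_countable[where f="\<lambda>i x. L n ! i", OF _ J_meas]) simp
    then show ?thesis unfolding gn_def using S0_meas by (intro measurable_If_set) auto
  qed
  have lim: "(\<lambda>n. gn n x) \<longlonglongrightarrow> g x" for x
  proof (cases "x \<in> S0")
    case True
    have d: "dist (gn n x) (g x) \<le> (1/2)^n" for n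
    proof -
      have "g x \<in> cball (L n ! I n x) ((1/2)^n)"
        using g_in[OF True, rule_format, of "Suc n"] unfolding A_Suc by blast
      moreover have "gn n x = L n ! I n x" using True by (simp add: gn_def J_def)
      ultimately show ?thesis by (simp add: mem_cball)
    qed
    have z: "(\<lambda>n. (1/2::real)^n) \<longlonglongrightarrow> 0" by (rule LIMSEQ_power_zero) simp
    have ev: "eventually (\<lambda>n. norm (dist (gn n x) (g x)) \<le> (1/2::real)^n) sequentially"
      by (intro always_eventually allI) (simp add: d)
    have "(\<lambda>n. dist (gn n x) (g x)) \<longlonglongrightarrow> 0"
      by (rule Lim_null_comparison[OF ev z])
    then show ?thesis by (rule tendsto_dist_iff[THEN iffD2])
  next
    case False
    then have "gn n x = u0" "g x = u0" for n by (simp_all add: gn_def g_def)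
    then show ?thesis by simp
  qed
  have g_meas: "g \<in> borel_measurable borel"
    by (rule borel_measurable_LIMSEQ_metric[OF gn_meas lim])
  have "(\<exists>u. (u, x) \<in> Gr) \<longrightarrow> (g x, x) \<in> Gr" for x
  proof
    assume "\<exists>u. (u, x) \<in> Gr"
    then have "x \<in> S0" by (auto simp: S0_def A_def)
    then have "g x \<in> A 0 x" using g_in[of x] by blast
    then show "(g x, x) \<in> Gr" by (simp add: A_def)
  qed
  moreover have "g x \<in> U" for x
  proof (cases "x \<in> S0")
    case True then show ?thesis using g_in[of x] AU by blast
  next
    case False then show ?thesis using u0 by (simp add: g_def)
  qed
  ultimately show ?thesis using g_meas by blast
qed

primrec Rb :: "(nat \<Rightarrow> 'x::real_vector \<Rightarrow> 'u \<Rightarrow> 'x) \<Rightarrow> 'u set \<Rightarrow> nat \<Rightarrow> (nat \<Rightarrow> 'x set) \<Rightarrow> 'x set \<Rightarrow> nat \<Rightarrow> 'x set" where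
  "Rb f U N T Em 0 = T N"
| "Rb f U N T Em (Suc j) = {x \<in> T (N - Suc j). \<exists>u\<in>U. \<forall>e\<in>Em. f (N - Suc j) x u + e \<in> Rb f U N T Em j}"

primrec zp :: "(nat \<Rightarrow> 'x::real_vector \<Rightarrow> 'x) \<Rightarrow> nat \<Rightarrow> 'x \<Rightarrow> (nat \<Rightarrow> 'x) \<Rightarrow> nat \<Rightarrow> 'x" where
  "zp phi k y w 0 = y"
| "zp phi k y w (Suc j) = phi (k + j) (zp phi k y w j) + w (k + j)"

lemma traj_local: "(\<forall>t<k+j. w t = w' t) \<Longrightarrow> traj f mu k y w j = traj f mu k y w' j"
  by (induction j) auto

theorem theorem7:
  fixes X W :: "'x::euclidean_space set"
    and U :: "'u::euclidean_space set"
    and f :: "nat \<Rightarrow> 'x \<Rightarrow> 'u \<Rightarrow> 'x"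
    and N k M :: nat
    and T :: "nat \<Rightarrow> 'x set"
    and Pw :: "'x measure"
    and E :: "nat \<Rightarrow> 'x set"
    and \<alpha> :: real
  assumes N_pos: "N > 0"
    and f_maps: "\<And>t x u. t < N \<Longrightarrow> x \<in> X \<Longrightarrow> u \<in> U \<Longrightarrow> f t x u \<in> X"
    and f_cont: "\<And>t. t < N \<Longrightarrow> continuous_on (X \<times> U) (\<lambda>(x, u). f t x u)"
    and U_compact: "compact U"
    and T_sub: "\<And>t. t \<le> N \<Longrightarrow> T t \<subseteq> X"
    and T_closed: "\<And>t. t \<le> N \<Longrightarrow> closed (T t)"
    and W_zero: "0 \<in> W"
    and Pw_prob: "prob_space Pw"
    and Pw_sets: "sets Pw = sets borel"
    and Pw_ac: "absolutely_continuous lborel Pw"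
    and Pw_W: "AE w in Pw. w \<in> W"
    and \<alpha>_range: "0 \<le> \<alpha>" "\<alpha> \<le> 1"
    and k_range: "k < N"
    and E_sub: "\<And>i. i \<in> {1..M} \<Longrightarrow> E i \<subseteq> W"
    and E_bounded: "\<And>i. i \<in> {1..M} \<Longrightarrow> bounded (E i)"
    and E_meas: "\<And>i. i \<in> {1..M} \<Longrightarrow> E i \<in> sets borel"
    and E_prob: "\<And>i. i \<in> {1..M} \<Longrightarrow>
                   measure (dist_seq Pw k N) (PiE {k..<N} (\<lambda>_. E i)) = \<alpha>"
  shows "(\<Union>m \<in> {1..M}. min_reach_set X U f N T (E m) k)
           \<subseteq> level_reach_set X U Pw f N T k \<alpha>"
proof
  fix y assume "y \<in> (\<Union>m \<in> {1..M}. min_reach_set X U f N T (E m) k)"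
  then obtain m where m: "m \<in> {1..M}" and ymin: "y \<in> min_reach_set X U f N T (E m) k" by blast
  define Em where "Em = E m"
  from ymin k_range obtain nu where yT: "y \<in> T k"
    and nuU: "\<forall>t \<in> {k..<N}. \<forall>x \<in> X. nu t x \<in> U"
    and nuR: "\<forall>w :: nat \<Rightarrow> 'x. (\<forall>t \<in> {k..<N}. w t \<in> Em) \<longrightarrow>
              (\<forall>j \<in> {1..N - k}. traj f nu k y w j \<in> T (k + j))"
    by (auto simp: min_reach_set_def Em_def)
  have yX: "y \<in> X" using yT T_sub[of k] k_range by (meson less_imp_le subsetD)
  define u0 where "u0 = nu k y"
  have u0U: "u0 \<in> U" using nuU yX k_range by (auto simp: u0_def)
  define R where "R t = Rb f U N T Em (N - t)" for t
  have R_N: "R N = T N" by (simp add: R_def)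
  have R_rec: "R t = {x \<in> T t. \<exists>u\<in>U. \<forall>e\<in>Em. f t x u + e \<in> R (Suc t)}" if "t < N" for t
  proof -
    have "N - t = Suc (N - Suc t)" using that by simp
    moreover have "N - Suc (N - Suc t) = t" using that by simp
    ultimately show ?thesis by (simp add: R_def)
  qed
  have R_T: "R t \<subseteq> T t" if "t \<le> N" for t
    using that R_N R_rec by (cases "t = N") auto
  define Gr where "Gr t = {(u, x). x \<in> T t \<and> u \<in> U \<and> (\<forall>e\<in>Em. f t x u + e \<in> R (Suc t))}" for t
  have Gr_closed: "closed (Gr t)" if "t < N" "closed (R (Suc t))" for t
  proof -
    define C where "C = U \<times> T t"
    have Cc: "closed C" unfolding C_def
      using closed_Times[OF compact_imp_closed[OF U_compact] T_closed[of t]] that(1) by simp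
    have cont: "continuous_on C (\<lambda>p. f t (snd p) (fst p) + e)" for e
    proof -
      have "continuous_on C (\<lambda>p. (\<lambda>(x, u). f t x u) (snd p, fst p))"
        apply (rule continuous_on_compose2[OF f_cont[OF that(1)]])
          apply (intro continuous_intros)
        using T_sub[of t] that(1) by (auto simp: C_def)
      then show ?thesis by (intro continuous_intros) simp
    qed
    have "Gr t = C \<inter> (\<Inter>e\<in>Em. C \<inter> (\<lambda>p. f t (snd p) (fst p) + e) -` R (Suc t))"
      by (auto simp: Gr_def C_def)
    moreover have "closed (C \<inter> (\<Inter>e\<in>Em. C \<inter> (\<lambda>p. f t (snd p) (fst p) + e) -` R (Suc t)))"
      using Cc cont that(2) by (intro closed_Int closed_INT ballI continuous_closed_preimage) auto
    ultimately show ?thesis by simp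
  qed
  have R_proj: "R t = {x. \<exists>u. u \<in> U \<and> (u, x) \<in> Gr t}" if "t < N" for t
    using R_rec[OF that] by (auto simp: Gr_def)
  have R_closed: "closed (R t)" if "t \<le> N" for t
    using that
  proof (induction "N - t" arbitrary: t)
    case 0 then have "t = N" by simp
    then show ?case using T_closed by (simp add: R_N)
  next
    case (Suc d)
    then have t: "t < N" by simp
    have "closed (R (Suc t))" using Suc.hyps(1)[of "Suc t"] Suc.hyps(2) t by simp
    then show ?case
      unfolding R_proj[OF t] by (rule closed_compact_projection[OF U_compact Gr_closed[OF t]])
  qed
  have "\<forall>t. \<exists>g. g \<in> borel_measurable borel \<and> (\<forall>x. g x \<in> U) \<and>
          (t < N \<longrightarrow> (\<forall>x. (\<exists>u. (u, x) \<in> Gr t) \<longrightarrow> (g x, x) \<in> Gr t))"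
  proof
    fix t
    show "\<exists>g. g \<in> borel_measurable borel \<and> (\<forall>x. g x \<in> U) \<and>
          (t < N \<longrightarrow> (\<forall>x. (\<exists>u. (u, x) \<in> Gr t) \<longrightarrow> (g x, x) \<in> Gr t))"
    proof (cases "t < N")
      case True
      have "Gr t \<subseteq> U \<times> UNIV" by (auto simp: Gr_def)
      then show ?thesis
        using borel_selection[OF Gr_closed[OF True R_closed] U_compact _ u0U] True by auto
    next
      case False then show ?thesis using u0U by (intro exI[of _ "\<lambda>_. u0"]) auto
    qed
  qed
  then obtain g where g_meas: "\<And>t. g t \<in> borel_measurable borel" and gU: "\<And>t x. g t x \<in> U"
    and g_sel: "\<And>t x. t < N \<Longrightarrow> (\<exists>u. (u, x) \<in> Gr t) \<Longrightarrow> (g t x, x) \<in> Gr t"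
    by metis
  have g_pol: "g \<in> markov_policies X U N"
  proof -
    have "univ_measurable (g t)" for t
      unfolding univ_measurable_def univ_measurable_set_def
    proof (intro ballI allI impI)
      fix B :: "'u set" and Mx :: "'x measure"
      assume B: "B \<in> sets borel" and Mx: "prob_space Mx \<and> sets Mx = sets borel"
      have "g t -` B \<inter> space borel \<in> sets borel" using measurable_sets[OF g_meas B] .
      then have "g t -` B \<in> sets Mx" using Mx by simp
      then show "g t -` B \<in> sets (completion Mx)" by simp
    qed
    then show ?thesis using gU by (auto simp: markov_policies_def)
  qed
  have yR: "y \<in> R k"
  proof (cases "Em = {}")
    case True then show ?thesis using R_rec[OF k_range] yT u0U by auto
  next
    case False
    then obtain e0 where e0: "e0 \<in> Em" by auto
    have P: "\<forall>w. (\<forall>t \<in> {k..<N}. w t \<in> Em) \<longrightarrow> traj f nu k y w (N - k - d) \<in> R (k + (N - k - d))"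
      if "d \<le> N - k" for d
      using that
    proof (induction d)
      case 0
      show ?case
      proof (intro allI impI)
        fix w :: "nat \<Rightarrow> 'x" assume "\<forall>t \<in> {k..<N}. w t \<in> Em"
        then have "traj f nu k y w (N - k) \<in> T (k + (N - k))"
        proof -
          have "N - k \<in> {1..N - k}" using k_range by simp
          then show ?thesis using nuR \<open>\<forall>t \<in> {k..<N}. w t \<in> Em\<close> by blast
        qed
        then show "traj f nu k y w (N - k - 0) \<in> R (k + (N - k - 0))" using R_N k_range by simp
      qed
    next
      case (Suc d)
      define j where "j = N - k - Suc d"
      have j: "N - k - d = Suc j" "k + j < N" using Suc.prems by (auto simp: j_def)
      show ?case unfolding j_def[symmetric]
      proof (intro allI impI)
        fix w :: "nat \<Rightarrow> 'x" assume w: "\<forall>t \<in> {k..<N}. w t \<in> Em"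
        define x where "x = traj f nu k y w j"
        have xT: "x \<in> T (k + j)"
        proof (cases "j = 0")
          case True then show ?thesis using yT by (simp add: x_def)
        next
          case False then show ?thesis using nuR w j by (auto simp: x_def)
        qed
        have xX: "x \<in> X" using xT T_sub[of "k + j"] j by auto
        have uU: "nu (k + j) x \<in> U" using nuU xX j by auto
        have "f (k + j) x (nu (k + j) x) + e \<in> R (Suc (k + j))" if e: "e \<in> Em" for e
        proof -
          define w' where "w' = w(k + j := e)"
          have w': "\<forall>t \<in> {k..<N}. w' t \<in> Em" using w e by (auto simp: w'_def)
          have "traj f nu k y w' j = x" unfolding x_def by (rule traj_local) (auto simp: w'_def)
          then have "traj f nu k y w' (Suc j) = f (k + j) x (nu (k + j) x) + e"
            by (simp add: w'_def)
          moreover have "traj f nu k y w' (N - k - d) \<in> R (k + (N - k - d))"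
            using Suc.IH Suc.prems w' by simp
          ultimately show ?thesis unfolding j(1) by simp
        qed
        then show "traj f nu k y w j \<in> R (k + j)"
          using R_rec[OF j(2)] xT uU by (auto simp: x_def[symmetric])
      qed
    qed
    have "\<forall>t \<in> {k..<N}. (\<lambda>_. e0) t \<in> Em" using e0 by simp
    then have "traj f nu k y (\<lambda>_. e0) (N - k - (N - k)) \<in> R (k + (N - k - (N - k)))"
      using P[of "N - k", OF le_refl, rule_format, of "\<lambda>_. e0"] by blast
    then show ?thesis by simp
  qed
  have good: "traj f g k y w j \<in> R (k + j)" if w: "\<forall>t \<in> {k..<N}. w t \<in> Em" and "j \<le> N - k" for w j
    using that(2)
  proof (induction j)
    case 0 then show ?case using yR by simp
  next
    case (Suc j)
    then have jN: "k + j < N" by simp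
    define x where "x = traj f g k y w j"
    have xR: "x \<in> R (k + j)" using Suc by (simp add: x_def)
    then have "\<exists>u. (u, x) \<in> Gr (k + j)" using R_proj[OF jN] by auto
    then have "(g (k + j) x, x) \<in> Gr (k + j)" by (rule g_sel[OF jN])
    then have "f (k + j) x (g (k + j) x) + w (k + j) \<in> R (Suc (k + j))"
      using w jN by (auto simp: Gr_def)
    then show ?case by (simp add: x_def)
  qed
  define D where "D = dist_seq Pw k N"
  have D_prob: "prob_space D"
    unfolding D_def dist_seq_def by (rule prob_space_PiM) (use Pw_prob in simp)
  have space_Pw: "space Pw = UNIV" using sets_eq_imp_space_eq[OF Pw_sets] by simp
  have space_D: "space D = PiE {k..<N} (\<lambda>_. UNIV)"
    by (simp add: D_def dist_seq_def space_PiM space_Pw)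
  define psi where "psi t p = (if p \<in> T t \<times> U then f t (fst p) (snd p) else 0)" for t p
  define phi where "phi t x = psi t (x, g t x)" for t x
  have psi_meas: "psi t \<in> borel_measurable borel" if "t < N" for t
  proof -
    have "continuous_on (T t \<times> U) (\<lambda>p. f t (fst p) (snd p))"
    proof -
      have "continuous_on (T t \<times> U) (\<lambda>(x, u). f t x u)"
        by (rule continuous_on_subset[OF f_cont[OF that]]) (use T_sub[of t] that in auto)
      then show ?thesis by (simp add: case_prod_beta')
    qed
    moreover have "T t \<times> U \<in> sets borel"
      using closed_Times[OF T_closed[of t] compact_imp_closed[OF U_compact]] that by (simp add: borel_closed)
    ultimately show ?thesis unfolding psi_def
      by (intro borel_measurable_continuous_on_if) (auto intro: continuous_on_const)
  qed
  have phi_meas: "phi t \<in> borel_measurable borel" if "t < N" for t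
  proof -
    have "(\<lambda>x. (x, g t x)) \<in> measurable borel (borel \<Otimes>\<^sub>M borel)"
      using g_meas by (intro measurable_Pair) auto
    then have "(\<lambda>x. (x, g t x)) \<in> measurable borel borel" by (simp add: borel_prod)
    then show ?thesis unfolding phi_def using psi_meas[OF that] by (rule measurable_compose)
  qed
  have comp_meas: "(\<lambda>w. w t) \<in> borel_measurable D" if "t \<in> {k..<N}" for t
  proof -
    have "(\<lambda>w. w t) \<in> measurable D Pw"
      unfolding D_def dist_seq_def using measurable_component_singleton[OF that, of "\<lambda>_. Pw"] by simp
    then show ?thesis by (simp add: measurable_cong_sets[OF refl Pw_sets])
  qed
  have z_meas: "(\<lambda>w. zp phi k y w j) \<in> borel_measurable D" if "j \<le> N - k" for j
    using that
  proof (induction j)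
    case 0 then show ?case by simp
  next
    case (Suc j)
    then have jN: "k + j < N" by simp
    have "(\<lambda>w. phi (k + j) (zp phi k y w j)) \<in> borel_measurable D"
      using measurable_compose[OF Suc.IH[OF _] phi_meas[OF jN]] Suc.prems by simp
    then show ?case using comp_meas[of "k + j"] jN by (simp add: borel_measurable_add)
  qed
  have z_eq: "zp phi k y w i = traj f g k y w i"
    if "i \<le> N - k" "\<forall>j<i. traj f g k y w j \<in> T (k + j)" for w i
    using that
  proof (induction i)
    case 0 then show ?case by simp
  next
    case (Suc i)
    then have jN: "k + i < N" and tT: "traj f g k y w i \<in> T (k + i)" by auto
    have IH: "zp phi k y w i = traj f g k y w i" using Suc by simp
    have ph: "phi (k + i) (traj f g k y w i) = f (k + i) (traj f g k y w i) (g (k + i) (traj f g k y w i))"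
      using tT gU[of "k + i" "traj f g k y w i"] by (simp add: phi_def psi_def)
    have "zp phi k y w (Suc i) = phi (k + i) (zp phi k y w i) + w (k + i)" by simp
    also have "\<dots> = phi (k + i) (traj f g k y w i) + w (k + i)" by (simp only: IH)
    also have "\<dots> = traj f g k y w (Suc i)" by (simp only: ph traj.simps)
    finally show ?case .
  qed
  define S where "S = {w \<in> space D. \<forall>j \<in> {1..N - k}. traj f g k y w j \<in> T (k + j)}"
  have S_eq: "S = space D \<inter> (\<Inter>j\<in>{1..N - k}. (\<lambda>w. zp phi k y w j) -` T (k + j) \<inter> space D)"
  proof (intro set_eqI iffI)
    fix w assume "w \<in> S"
    then have w: "w \<in> space D" "\<forall>j \<in> {1..N - k}. traj f g k y w j \<in> T (k + j)"
      by (auto simp: S_def)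
    have "zp phi k y w j \<in> T (k + j)" if j: "j \<in> {1..N - k}" for j
    proof -
      have "\<forall>j'<j. traj f g k y w j' \<in> T (k + j')"
      proof (intro allI impI)
        fix j' assume "j' < j"
        then show "traj f g k y w j' \<in> T (k + j')" using w(2) j yT by (cases "j' = 0") auto
      qed
      then show ?thesis using z_eq[of j w] w(2) j by auto
    qed
    then show "w \<in> space D \<inter> (\<Inter>j\<in>{1..N - k}. (\<lambda>w. zp phi k y w j) -` T (k + j) \<inter> space D)"
      using w(1) by auto
  next
    fix w assume "w \<in> space D \<inter> (\<Inter>j\<in>{1..N - k}. (\<lambda>w. zp phi k y w j) -` T (k + j) \<inter> space D)"
    then have w: "w \<in> space D" "\<forall>j \<in> {1..N - k}. zp phi k y w j \<in> T (k + j)" by auto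
    have "\<forall>j\<le>i. traj f g k y w j \<in> T (k + j)" if "i \<le> N - k" for i
      using that
    proof (induction i)
      case 0 then show ?case using yT by simp
    next
      case (Suc i)
      then have IH: "\<forall>j\<le>i. traj f g k y w j \<in> T (k + j)" by simp
      then have "zp phi k y w (Suc i) = traj f g k y w (Suc i)"
        using z_eq[of "Suc i" w] Suc.prems by (auto simp: less_Suc_eq_le)
      then have "traj f g k y w (Suc i) \<in> T (k + Suc i)" using w(2) Suc.prems by force
      then show ?case using IH by (auto simp: le_Suc_eq)
    qed
    then show "w \<in> S" using w(1) by (auto simp: S_def)
  qed
  have S_meas: "S \<in> sets D"
  proof -
    have "(\<lambda>w. zp phi k y w j) -` T (k + j) \<inter> space D \<in> sets D" if "j \<in> {1..N - k}" for j
      using that T_closed by (intro measurable_sets[OF z_meas] borel_closed) auto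
    then have "(\<Inter>j\<in>{1..N - k}. (\<lambda>w. zp phi k y w j) -` T (k + j) \<inter> space D) \<in> sets D"
      using k_range by (intro sets.finite_INT) auto
    then show ?thesis unfolding S_eq by (intro sets.Int sets.top)
  qed
  have PS: "PiE {k..<N} (\<lambda>_. Em) \<subseteq> S"
  proof
    fix w assume w: "w \<in> PiE {k..<N} (\<lambda>_. Em)"
    then have "w \<in> space D" by (auto simp: space_D)
    moreover have "traj f g k y w j \<in> T (k + j)" if "j \<in> {1..N - k}" for j
    proof -
      have wE: "\<forall>t \<in> {k..<N}. w t \<in> Em" using w by (auto simp: PiE_def Pi_def)
      have "j \<le> N - k" "k + j \<le> N" using that k_range by auto
      then show ?thesis using good[OF wE] R_T[of "k + j"] by blast
    qed
    ultimately show "w \<in> S" by (auto simp: S_def)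
  qed
  have "\<alpha> = measure D (PiE {k..<N} (\<lambda>_. Em))" using E_prob[OF m] by (simp add: D_def Em_def)
  also have "\<dots> \<le> measure D S"
    using finite_measure.finite_measure_mono[OF prob_space.finite_measure[OF D_prob] PS S_meas] .
  also have "\<dots> = reach_prob Pw f N T g k y"
    using S_meas by (simp add: reach_prob_def D_def S_def)
  finally have ge: "\<alpha> \<le> reach_prob Pw f N T g k y" .
  have bdd: "bdd_above ((\<lambda>mu. reach_prob Pw f N T mu k y) ` markov_policies X U N)"
  proof (rule bdd_aboveI2)
    fix mu
    have "prob_space (completion D)" using D_prob by (rule prob_space.prob_space_completion)
    then show "reach_prob Pw f N T mu k y \<le> 1"
      unfolding reach_prob_def D_def[symmetric] by (rule prob_space.prob_le_1)
  qed
  have "\<alpha> \<le> (SUP mu \<in> markov_policies X U N. reach_prob Pw f N T mu k y)"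
    using cSUP_upper2[OF bdd g_pol, of \<alpha>] ge by simp
  then show "y \<in> level_reach_set X U Pw f N T k \<alpha>"
    using yT by (simp add: level_reach_set_def)
qed

end
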